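(* Let $\varphi$ be an AND-OR formula in which every gate has fan-in two, with its checkpoints placed and the associated formula $\varphi'$ formed as described in the context. Let $v'$ be an internal vertex of $\varphi'$, with children $c'_1,c'_2,\dots,c'_{J+1}$ sorted in decreasing order of their distances from the root of $\varphi'$, and with $s_{c'_1}\ge s_{c'_2}$. Then for every $j\ge 2$, $s_{c'_j}\le s_{v'}/2$. If $v'$ is not a small vertex, then $s_{c'_1}\le s_{v'}-\frac{1}{\sqrt 2}\sqrt{s_{v'}}$.
   Context: An AND-OR formula with fan-in-two gates is a rooted binary tree (root $r$) whose internal vertices are AND or OR gates and whose leaves are input variables. For an internal vertex $v$, $s_1(v)\ge s_2(v)\ge1$ are the numbers of leaves of its two input subformulas (child 1 is a larger one, ties broken arbitrarily). Define $\alpha(v)=\epsilon(v)=\bigl((\sqrt{s_1(v)}+\sqrt{s_2(v)})/\sqrt{s_1(v)+s_2(v)}\bigr)^{1/2}$. Checkpoint placement. Step 1: for every internal vertex $v$, mark the edge from $v$ to its smaller input subformula (child 2). Afterwards every internal vertex has exactly one unmarked edge to a child, so the unmarked edges partition the internal vertices into paths; let $\mathcal{S}$ be the set of vertices that are, for one of these paths, the endpoint closer to $r$. Step 2: for each such path, starting at its far end and moving toward the root, keep track of the product of $\alpha(v)$ (for AND gates) or $\epsilon(v)$ (for OR gates) over the internal vertices added so far; after adding a vertex that makes this product exceed $\sqrt e$, split the path by marking (checkpointing) the edge from that vertex to the next vertex of the path toward the root, and restart the product. The marked edges ("checkpoints") divide the internal vertices of $\varphi$ into checkpointed paths. The formula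 $\varphi'$: its internal vertices are the checkpointed paths $\xi$ of $\varphi$, its leaves are the leaves of $\varphi$; the children in $\varphi'$ of a path $\xi$ with $J$ internal vertices are the $J+1$ subformulas hanging off $\xi$ (each a leaf of $\varphi$ or the path beginning at the corresponding child vertex). For a vertex $v'$ of $\varphi'$, $s_{v'}$ is the number of leaves of $\varphi$ in the subformula rooted at $v'$ (equal to $1$ for a leaf). An internal vertex $v'$ of $\varphi'$ is small if its checkpointed path has an endpoint in $\mathcal{S}$. *)

theory Defs
  imports Complex_Main "HOL-Library.Sublist"
begin

datatype gate = AND | OR

datatype 'a formula = Leaf 'a | Gate gate "'a formula" "'a formula"

fun nleaves :: "'a formula \<Rightarrow> nat" where
  "nleaves (Leaf x) = 1"
| "nleaves (Gate g l r) = nleaves l + nleaves r"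

text \<open>Vertices are addressed by positions: lists of directions from the root
  (False = left input, True = right input).\<close>
type_synonym pos = "bool list"

fun subf :: "'a formula \<Rightarrow> pos \<Rightarrow> 'a formula option" where
  "subf t [] = Some t"
| "subf (Leaf x) (b # p) = None"
| "subf (Gate g l r) (b # p) = subf (if b then r else l) p"

definition internal :: "'a formula \<Rightarrow> pos \<Rightarrow> bool" where
  "internal t p \<longleftrightarrow> (\<exists>g l r. subf t p = Some (Gate g l r))"

definition sz :: "'a formula \<Rightarrow> pos \<Rightarrow> nat" where
  "sz t p = (case subf t p of Some u \<Rightarrow> nleaves u | None \<Rightarrow> 0)"

text \<open>Tie-breaking: tb p says which input of the internal vertex p is child 1
  (a larger input subformula); the other one is child 2.\<close>
definition child1 :: "(pos \<Rightarrow> bool) \<Rightarrow> pos \<Rightarrow> pos" where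
  "child1 tb p = p @ [tb p]"

definition child2 :: "(pos \<Rightarrow> bool) \<Rightarrow> pos \<Rightarrow> pos" where
  "child2 tb p = p @ [\<not> tb p]"

definition admissible_tb :: "'a formula \<Rightarrow> (pos \<Rightarrow> bool) \<Rightarrow> bool" where
  "admissible_tb t tb \<longleftrightarrow>
     (\<forall>p. internal t p \<longrightarrow> sz t (child2 tb p) \<le> sz t (child1 tb p))"

definition alpha_w :: "nat \<Rightarrow> nat \<Rightarrow> real" where
  "alpha_w s1 s2 = sqrt ((sqrt (real s1) + sqrt (real s2)) / sqrt (real s1 + real s2))"

definition eps_w :: "nat \<Rightarrow> nat \<Rightarrow> real" where
  "eps_w s1 s2 = sqrt ((sqrt (real s1) + sqrt (real s2)) / sqrt (real s1 + real s2))"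

fun gate_w :: "gate \<Rightarrow> nat \<Rightarrow> nat \<Rightarrow> real" where
  "gate_w AND s1 s2 = alpha_w s1 s2"
| "gate_w OR s1 s2 = eps_w s1 s2"

text \<open>Restart of the running product after a checkpoint.\<close>
definition restart :: "real \<Rightarrow> real" where
  "restart a = (if a > sqrt (exp 1) then 1 else a)"

text \<open>acc tb p u, for u the subformula at position p, is the running product of
  Step 2 right after the vertex p has been added (on the unmarked path through p,
  processed from its far end towards the root).\<close>
fun acc :: "(pos \<Rightarrow> bool) \<Rightarrow> pos \<Rightarrow> 'a formula \<Rightarrow> real" where
  "acc tb p (Leaf x) = 1"
| "acc tb p (Gate g l r) =
     (if tb p
      then restart (acc tb (p @ [True]) r) * gate_w g (nleaves r) (nleaves l)
      else restart (acc tb (p @ [False]) l) * gate_w g (nleaves l) (nleaves r))"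

text \<open>Step 2 checkpoint at internal vertex p: the edge from p to the next vertex of
  its path toward the root is marked.\<close>
definition cut :: "'a formula \<Rightarrow> (pos \<Rightarrow> bool) \<Rightarrow> pos \<Rightarrow> bool" where
  "cut t tb p \<longleftrightarrow> internal t p \<and>
     (case subf t p of Some u \<Rightarrow> acc tb p u > sqrt (exp 1) | None \<Rightarrow> False)"

text \<open>The edge from the parent of p to p is marked (Step 1: p is child 2 of its
  parent; Step 2: checkpoint).\<close>
definition marked :: "'a formula \<Rightarrow> (pos \<Rightarrow> bool) \<Rightarrow> pos \<Rightarrow> bool" where
  "marked t tb p \<longleftrightarrow> p \<noteq> [] \<and> (p = child2 tb (butlast p) \<or> cut t tb p)"

text \<open>The set S: endpoints closer to the root of the paths of Step 1.\<close>
definition inS :: "'a formula \<Rightarrow> (pos \<Rightarrow> bool) \<Rightarrow> pos \<Rightarrow> bool" where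
  "inS t tb p \<longleftrightarrow> internal t p \<and> (p = [] \<or> p = child2 tb (butlast p))"

text \<open>Internal vertices of phi' = checkpointed paths, identified by their top vertex.\<close>
definition cp_top :: "'a formula \<Rightarrow> (pos \<Rightarrow> bool) \<Rightarrow> pos \<Rightarrow> bool" where
  "cp_top t tb v \<longleftrightarrow> internal t v \<and> (v = [] \<or> marked t tb v)"

text \<open>Internal vertices of phi on the checkpointed path with top v.\<close>
definition seg :: "'a formula \<Rightarrow> (pos \<Rightarrow> bool) \<Rightarrow> pos \<Rightarrow> pos set" where
  "seg t tb v = {u. internal t u \<and> prefix v u \<and>
      (\<forall>k. length v < k \<and> k \<le> length u \<longrightarrow> \<not> marked t tb (take k u))}"

text \<open>Children in phi' of the path with top v: the subformulas hanging off it.\<close>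
definition children' :: "'a formula \<Rightarrow> (pos \<Rightarrow> bool) \<Rightarrow> pos \<Rightarrow> pos set" where
  "children' t tb v = {c. c \<noteq> [] \<and> butlast c \<in> seg t tb v \<and> c \<notin> seg t tb v}"

definition bottom :: "'a formula \<Rightarrow> (pos \<Rightarrow> bool) \<Rightarrow> pos \<Rightarrow> pos \<Rightarrow> bool" where
  "bottom t tb v u \<longleftrightarrow> u \<in> seg t tb v \<and> child1 tb u \<notin> seg t tb v"

definition small :: "'a formula \<Rightarrow> (pos \<Rightarrow> bool) \<Rightarrow> pos \<Rightarrow> bool" where
  "small t tb v \<longleftrightarrow> inS t tb v \<or> (\<exists>u. bottom t tb v u \<and> inS t tb u)"

end

theory Submission
  imports Defs
begin

lemma subf_append: "subf t (p @ q) = (case subf t p of None \<Rightarrow> None | Some u \<Rightarrow> subf u q)"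
proof (induction p arbitrary: t)
  case Nil then show ?case by simp
next
  case (Cons a p) then show ?case by (cases t) auto
qed

lemma subf_le: "subf u q = Some w \<Longrightarrow> nleaves w \<le> nleaves u"
proof (induction q arbitrary: u)
  case Nil then show ?case by simp
next
  case (Cons a q) then show ?case
    by (cases u) (fastforce split: if_splits)+
qed

lemma subf_Cons_gate: "subf w (x # q) \<noteq> None \<Longrightarrow> \<exists>g l r. w = Gate g l r"
  by (cases w) auto

lemma nleaves_pos: "nleaves u \<ge> 1"
  by (induction u) auto

lemma internal_take:
  assumes "internal t u" "k \<le> length u" shows "internal t (take k u)"
proof (cases "k = length u")
  case True then show ?thesis using assms by simp
next
  case False
  obtain g l r where gl: "subf t u = Some (Gate g l r)" using assms(1) unfolding internal_def by blast
  have u: "u = take k u @ drop k u" by simp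
  have dne: "drop k u \<noteq> []" using False assms(2) by simp
  then obtain x q where xq: "drop k u = x # q" by (cases "drop k u") auto
  have "subf t (take k u @ drop k u) = Some (Gate g l r)" using gl u by metis
  then obtain w where w: "subf t (take k u) = Some w" "subf w (x # q) \<noteq> None"
    unfolding subf_append xq by (auto split: option.splits)
  then show ?thesis using subf_Cons_gate[OF w(2)] unfolding internal_def by auto
qed

lemma sz_prefix:
  assumes "prefix v u" "subf t u \<noteq> None" shows "sz t u \<le> sz t v"
proof -
  obtain zs where u: "u = v @ zs" using assms(1) prefix_def by blast
  obtain w where w: "subf t u = Some w" using assms(2) by auto
  then obtain w' where w': "subf t v = Some w'" "subf w' zs = Some w"
    unfolding u subf_append by (auto split: option.splits)
  show ?thesis using subf_le[OF w'(2)] w w' unfolding sz_def by simp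
qed

lemma sz_split:
  assumes "subf t p = Some (Gate g l r)"
  shows "sz t (child1 tb p) + sz t (child2 tb p) = sz t p"
    "sz t (child1 tb p) \<ge> 1" "sz t (child2 tb p) \<ge> 1"
    "subf t (child1 tb p) \<noteq> None"
  using assms nleaves_pos[of l] nleaves_pos[of r]
  by (auto simp: sz_def child1_def child2_def subf_append)

lemma sz_split2:
  assumes "internal t p"
  shows "sz t (child1 tb p) + sz t (child2 tb p) = sz t p"
    "sz t (child1 tb p) \<ge> 1" "sz t (child2 tb p) \<ge> 1"
    "subf t (child1 tb p) \<noteq> None"
proof -
  obtain g l r where "subf t p = Some (Gate g l r)" using assms unfolding internal_def by blast
  from sz_split[OF this, of tb] show "sz t (child1 tb p) + sz t (child2 tb p) = sz t p"
    "sz t (child1 tb p) \<ge> 1" "sz t (child2 tb p) \<ge> 1"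
    "subf t (child1 tb p) \<noteq> None" by auto
qed

definition AA :: "'a formula \<Rightarrow> (pos \<Rightarrow> bool) \<Rightarrow> pos \<Rightarrow> real" where
  "AA t tb q = (case subf t q of Some w \<Rightarrow> acc tb q w | None \<Rightarrow> 0)"

lemma gate_w_nonneg: "gate_w g a b \<ge> 0"
  by (cases g) (auto simp: alpha_w_def eps_w_def)

lemma acc_nonneg: "acc tb p u \<ge> 0"
  by (induction tb p u rule: acc.induct)
     (auto simp: restart_def gate_w_nonneg intro!: mult_nonneg_nonneg)

lemma AA_nonneg: "AA t tb q \<ge> 0"
  by (auto simp: AA_def acc_nonneg split: option.splits)

lemma gate_w_sq: "(gate_w g a b)^2 = (sqrt (real a) + sqrt (real b)) / sqrt (real a + real b)"
  by (cases g) (auto simp: alpha_w_def eps_w_def)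

lemma AA_step:
  assumes "internal t p"
  shows "\<exists>g. AA t tb p = restart (AA t tb (child1 tb p)) * gate_w g (sz t (child1 tb p)) (sz t (child2 tb p))"
proof -
  obtain g l r where gl: "subf t p = Some (Gate g l r)" using assms unfolding internal_def by blast
  have "AA t tb p = restart (AA t tb (child1 tb p)) * gate_w g (sz t (child1 tb p)) (sz t (child2 tb p))"
    using gl by (auto simp: AA_def sz_def child1_def child2_def subf_append)
  then show ?thesis by blast
qed

lemma seg_basic: "u \<in> seg t tb v \<Longrightarrow> internal t u \<and> prefix v u"
  by (auto simp: seg_def)

lemma v_in_seg: "internal t v \<Longrightarrow> v \<in> seg t tb v"
  by (auto simp: seg_def prefix_def)

lemma seg_take:
  assumes "u \<in> seg t tb v" "length v \<le> k" "k \<le> length u"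
  shows "take k u \<in> seg t tb v"
proof -
  have i: "internal t u" and p: "prefix v u" using assms(1) by (auto simp: seg_def)
  obtain zs where u: "u = v @ zs" using p prefix_def by blast
  have "prefix v (take k u)" using assms(2) unfolding u by (simp add: prefix_def)
  moreover have "internal t (take k u)" using internal_take[OF i assms(3)] .
  moreover have "\<forall>k'. length v < k' \<and> k' \<le> length (take k u) \<longrightarrow> \<not> marked t tb (take k' (take k u))"
    using assms(1) assms(3) by (auto simp: seg_def min_def)
  ultimately show ?thesis by (simp add: seg_def)
qed

lemma seg_len: "u \<in> seg t tb v \<Longrightarrow> length v \<le> length u"
  by (auto simp: seg_def prefix_def)

lemma seg_neq_len: "u \<in> seg t tb v \<Longrightarrow> u \<noteq> v \<Longrightarrow> length v < length u"
  by (auto dest!: seg_basic simp: prefix_def)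

lemma seg_notmarked: "u \<in> seg t tb v \<Longrightarrow> u \<noteq> v \<Longrightarrow> \<not> marked t tb u"
proof -
  assume a: "u \<in> seg t tb v" "u \<noteq> v"
  have "length v < length u" using seg_neq_len[OF a] .
  then show ?thesis using a(1) unfolding seg_def by (metis (mono_tags, lifting) mem_Collect_eq order_refl take_all)
qed

lemma seg_child1:
  assumes "u \<in> seg t tb v" "u \<noteq> v"
  shows "u = child1 tb (butlast u) \<and> butlast u \<in> seg t tb v"
proof
  have l: "length v < length u" using seg_neq_len[OF assms] .
  then have ne: "u \<noteq> []" by auto
  have nm: "\<not> marked t tb u" using seg_notmarked[OF assms] .
  have u: "u = butlast u @ [last u]" using ne by simp
  have "u \<noteq> butlast u @ [\<not> tb (butlast u)]" using nm ne by (simp add: marked_def child2_def)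
  then have "last u = tb (butlast u)" using u
  proof -
    assume a1: "u \<noteq> butlast u @ [\<not> tb (butlast u)]" and a2: "u = butlast u @ [last u]"
    show ?thesis
    proof (rule ccontr)
      assume "last u \<noteq> tb (butlast u)"
      then have "last u = (\<not> tb (butlast u))" by blast
      then show False using a1 a2 by simp
    qed
  qed
  then show "u = child1 tb (butlast u)" using u by (simp add: child1_def)
  show "butlast u \<in> seg t tb v" using seg_take[OF assms(1), of "length u - 1"] l
    by (simp add: butlast_conv_take)
qed

lemma seg_iter: "\<forall>u. u \<in> seg t tb v \<longrightarrow> length u = length v + k \<longrightarrow> u = (child1 tb ^^ k) v"
proof (induction k)
  case 0 then show ?case
    by (auto dest!: seg_basic simp: prefix_def)
next
  case (Suc k)
  show ?case
  proof (intro allI impI)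
    fix u assume a: "u \<in> seg t tb v" "length u = length v + Suc k"
    then have "u \<noteq> v" by auto
    from seg_child1[OF a(1) this] have h: "u = child1 tb (butlast u)" "butlast u \<in> seg t tb v" by auto
    have "butlast u = (child1 tb ^^ k) v" using Suc h(2) a(2) by simp
    then show "u = (child1 tb ^^ Suc k) v" using h(1) by simp
  qed
qed

lemma seg_unique:
  assumes "u \<in> seg t tb v" "u' \<in> seg t tb v" "length u = length u'"
  shows "u = u'"
proof -
  define k where "k = length u - length v"
  have "length u = length v + k" "length u' = length v + k"
    using seg_len[OF assms(1)] assms(3) by (auto simp: k_def)
  then show ?thesis using seg_iter[of t tb v k] assms by metis
qed

lemma child2_not_seg:
  assumes "u \<in> seg t tb v" shows "child2 tb u \<notin> seg t tb v"
proof
  assume a: "child2 tb u \<in> seg t tb v"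
  have "child2 tb u \<noteq> v" using seg_len[OF assms] by (auto simp: child2_def)
  from seg_notmarked[OF a this] show False by (simp add: marked_def child2_def)
qed

lemma child2_children: "u \<in> seg t tb v \<Longrightarrow> child2 tb u \<in> children' t tb v"
  using child2_not_seg by (fastforce simp: children'_def child2_def)

lemma step_bound:
  fixes S1 S2 m :: nat
  assumes "1 \<le> S2" "1 \<le> m" "m \<le> S1 + S2"
  shows "(sqrt (real S1) + sqrt (real S2)) / sqrt (real S1 + real S2) \<le> exp (real S2 / sqrt (real m))"
proof -
  have pos: "sqrt (real S1 + real S2) > 0" using assms by simp
  have "sqrt (real S1) \<le> sqrt (real S1 + real S2)" by simp
  then have "(sqrt (real S1) + sqrt (real S2)) / sqrt (real S1 + real S2) \<le> 1 + sqrt (real S2) / sqrt (real S1 + real S2)"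
    using pos by (simp add: add_divide_distrib)
  also have "sqrt (real S2) \<le> real S2"
  proof -
    have "sqrt (real S2) \<le> sqrt (real S2 * real S2)" using assms(1)
      by (intro real_sqrt_le_mono) (simp add: mult_le_cancel_left1)
    then show ?thesis by simp
  qed
  then have "sqrt (real S2) / sqrt (real S1 + real S2) \<le> real S2 / sqrt (real m)"
    using assms by (intro frac_le) auto
  then have "1 + sqrt (real S2) / sqrt (real S1 + real S2) \<le> 1 + real S2 / sqrt (real m)" by simp
  also have "\<dots> \<le> exp (real S2 / sqrt (real m))" by (rule exp_ge_add_one_self)
  finally show ?thesis .
qed

lemma final_arith:
  fixes s m :: real
  assumes "s \<ge> 2" "s - m \<ge> 1" "m \<ge> 0" "1 < (s - m) / sqrt m"
  shows "m \<le> s - sqrt s / sqrt 2"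
proof (rule ccontr)
  assume "\<not> ?thesis"
  then have D: "s - m < sqrt s / sqrt 2" by simp
  have mpos: "m > 0" using assms(4) assms(3) by (cases "m = 0") auto
  have "sqrt m < s - m" using assms(4) mpos by (simp add: field_simps)
  then have a: "m < (s - m)^2" using mpos
    by (smt (verit, best) real_le_rsqrt)
  have q2: "(sqrt s / sqrt 2)^2 = s/2" using assms(1) by (simp add: power_divide)
  have b: "(s - m)^2 < s / 2" using D assms(2) q2
    by (smt (verit) power2_le_imp_le real_sqrt_ge_zero divide_nonneg_nonneg)
  have "s - m \<le> (s-m)^2" using assms(2) by (simp add: power2_eq_square)
  then show False using a b by linarith
qed

lemma nonempty_child: "x \<noteq> [] \<Longrightarrow> x = child1 tb (butlast x) \<or> x = child2 tb (butlast x)"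
proof -
  assume ne: "x \<noteq> []"
  then have x: "x = butlast x @ [last x]" by simp
  show ?thesis
  proof (cases "last x = tb (butlast x)")
    case True
    have "x = butlast x @ [tb (butlast x)]" using x unfolding True .
    then show ?thesis unfolding child1_def by blast
  next
    case False then have e: "last x = (\<not> tb (butlast x))" by blast
    have "x = butlast x @ [\<not> tb (butlast x)]" using x unfolding e .
    then show ?thesis unfolding child2_def by blast
  qed
qed

lemma seg_prefix_of:
  assumes "u \<in> seg t tb v" "b \<in> seg t tb v" "length u \<le> length b"
  shows "take (length u) b = u"
  using seg_take[OF assms(2) seg_len[OF assms(1)] assms(3)] assms seg_unique by fastforce

lemma seg_next:
  assumes "u \<in> seg t tb v" "b \<in> seg t tb v" "length u < length b"
  shows "child1 tb u \<in> seg t tb v \<and> take (length u + 1) b = child1 tb u"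
proof -
  define y where "y = take (length u + 1) b"
  have lu: "length v \<le> length u" using seg_len[OF assms(1)] .
  have ys: "y \<in> seg t tb v" unfolding y_def using seg_take[OF assms(2)] lu assms(3) by simp
  have ly: "length y = length u + 1" unfolding y_def using assms(3) by simp
  have "y \<noteq> v" using ly lu by auto
  from seg_child1[OF ys this] have h: "y = child1 tb (butlast y)" "butlast y \<in> seg t tb v" by auto
  have "butlast y = u" using seg_unique[OF h(2) assms(1)] ly by simp
  then show ?thesis using h ys unfolding y_def by simp
qed

theorem lemma3p12:
  fixes t :: "'a formula" and tb :: "pos \<Rightarrow> bool" and v :: pos
    and c :: "nat \<Rightarrow> pos" and J :: nat
  assumes tb: "admissible_tb t tb"
    and v: "cp_top t tb v"
    and J: "J = card (seg t tb v)"
    and c_bij: "bij_betw c {1..J+1} (children' t tb v)"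
    and c_sorted: "\<And>i j. 1 \<le> i \<Longrightarrow> i \<le> j \<Longrightarrow> j \<le> J + 1 \<Longrightarrow> length (c j) \<le> length (c i)"
    and c12: "sz t (c 2) \<le> sz t (c 1)"
  shows "(\<forall>j\<in>{2..J+1}. real (sz t (c j)) \<le> real (sz t v) / 2)
       \<and> (\<not> small t tb v \<longrightarrow>
            real (sz t (c 1)) \<le> real (sz t v) - sqrt (real (sz t v)) / sqrt 2)"
proof -
  have vi: "internal t v" using v by (simp add: cp_top_def)
  have img: "c ` {1..J+1} = children' t tb v" and inj: "inj_on c {1..J+1}"
    using c_bij by (auto simp: bij_betw_def)
  have c1ch: "c 1 \<in> children' t tb v" using img by auto
  define b where "b = butlast (c 1)"
  have bseg: "b \<in> seg t tb v" and c1ne: "c 1 \<noteq> []" and c1ns: "c 1 \<notin> seg t tb v"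
    using c1ch by (auto simp: children'_def b_def)
  have c1cases: "c 1 = child1 tb b \<or> c 1 = child2 tb b"
    using nonempty_child[OF c1ne] by (simp add: b_def)
  have lc1: "length (c 1) = length b + 1" using c1ne by (simp add: b_def)
  have maxlen: "length x \<le> length (c 1)" if "x \<in> children' t tb v" for x
  proof -
    have "x \<in> c ` {1..J+1}" using that img by simp
    then obtain j where "j \<in> {1..J+1}" "x = c j" by blast
    then show ?thesis using c_sorted[of 1 j] by auto
  qed
  have seglen: "length u \<le> length b" if "u \<in> seg t tb v" for u
    using maxlen[OF child2_children[OF that]] lc1 by (simp add: child2_def)
  have bi: "internal t b" using seg_basic[OF bseg] by simp
  have c1b_ns: "child1 tb b \<notin> seg t tb v" using seglen by (fastforce simp: child1_def)
  have c1b_ch: "child1 tb b \<in> children' t tb v" using c1b_ns bseg by (simp add: children'_def child1_def)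
  have c2b_ch: "child2 tb b \<in> children' t tb v" using child2_children[OF bseg] .
  define d where "d = (if c 1 = child1 tb b then child2 tb b else child1 tb b)"
  have dch: "d \<in> children' t tb v" using c1b_ch c2b_ch by (simp add: d_def)
  have c12b: "child1 tb b \<noteq> child2 tb b" by (simp add: child1_def child2_def)
  have dne: "d \<noteq> c 1" using c1cases c12b by (auto simp: d_def)
  have dcases: "{c 1, d} = {child1 tb b, child2 tb b}" using c1cases c12b by (auto simp: d_def)
  have "d \<in> c ` {1..J+1}" using dch img by simp
  then obtain k where k: "k \<in> {1..J+1}" "c k = d" by (metis imageE)
  have k2: "2 \<le> k" using k dne by (cases "k = 1") auto
  have J1: "2 \<le> J + 1" using k k2 by auto
  have ld: "length d = length b + 1" by (simp add: d_def child1_def child2_def)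
  have "length (c k) \<le> length (c 2)" using c_sorted[of 2 k] k k2 by auto
  moreover have "length (c 2) \<le> length (c 1)" using c_sorted[of 1 2] J1 by auto
  ultimately have lc2: "length (c 2) = length b + 1" using k ld lc1 by auto
  have c2ch: "c 2 \<in> children' t tb v" using img J1 by auto
  then have c2ne: "c 2 \<noteq> []" and bc2: "butlast (c 2) \<in> seg t tb v" by (auto simp: children'_def)
  have bl2: "butlast (c 2) = b" using seg_unique[OF bc2 bseg] lc2 by simp
  have in12: "(1::nat) \<in> {1..J+1}" "(2::nat) \<in> {1..J+1}" using J1 by auto
  have c2c1: "c 2 \<noteq> c 1"
  proof
    assume "c 2 = c 1"
    then have "(2::nat) = 1" using inj_onD[OF inj _ in12(2) in12(1)] by blast
    then show False by simp
  qed
  have c2d: "c 2 = d"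
  proof -
    have "c 2 = child1 tb b \<or> c 2 = child2 tb b"
      using nonempty_child[OF c2ne] bl2 by simp
    then show ?thesis using c2c1 c1cases by (auto simp: d_def)
  qed
  have szb: "sz t (child1 tb b) + sz t (child2 tb b) = sz t b" using sz_split2[OF bi] by simp
  have szbv: "sz t b \<le> sz t v" using sz_prefix seg_basic[OF bseg] bi
    by (metis internal_def option.distinct(1))
  have szc1d: "sz t (c 1) + sz t d = sz t b" using szb c1cases by (auto simp: d_def)
  have part1: "\<forall>j\<in>{2..J+1}. real (sz t (c j)) \<le> real (sz t v) / 2"
  proof
    fix j assume j: "j \<in> {2..J+1}"
    define x where "x = c j"
    have xch: "x \<in> children' t tb v" using img j x_def by auto
    define u where "u = butlast x"
    have us: "u \<in> seg t tb v" and xns: "x \<notin> seg t tb v" and xne: "x \<noteq> []"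
      using xch by (auto simp: children'_def u_def)
    have ui: "internal t u" using seg_basic[OF us] by simp
    have szuv: "sz t u \<le> sz t v" using sz_prefix seg_basic[OF us] ui
      by (metis internal_def option.distinct(1))
    have xc: "x = child1 tb u \<or> x = child2 tb u"
      using nonempty_child[OF xne] by (simp add: u_def)
    then show "real (sz t (c j)) \<le> real (sz t v) / 2"
    proof
      assume x2: "x = child2 tb u"
      have "sz t (child2 tb u) \<le> sz t (child1 tb u)" using tb ui by (simp add: admissible_tb_def)
      then show ?thesis using x2 sz_split2(1)[OF ui, of tb] szuv x_def by simp
    next
      assume x1: "x = child1 tb u"
      have "\<not> length u < length b" using seg_next[OF us bseg] x1 xns by blast
      then have "u = b" using seglen[OF us] seg_unique[OF us bseg] by simp
      moreover have "x \<noteq> c 1"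
      proof
        assume "x = c 1"
        then have "j = 1" using inj_onD[OF inj _ _ in12(1)] j unfolding x_def by auto
        then show False using j by simp
      qed
      ultimately have "x = c 2" using x1 c2d c1cases by (auto simp: d_def)
      then have "sz t x \<le> sz t (c 1)" using c12 by simp
      then show ?thesis using szc1d c2d \<open>x = c 2\<close> szbv x_def by simp
    qed
  qed
  have part2: "real (sz t (c 1)) \<le> real (sz t v) - sqrt (real (sz t v)) / sqrt 2"
    if ns: "\<not> small t tb v"
  proof -
    have ninS: "\<not> inS t tb v" using ns by (simp add: small_def)
    have vne: "v \<noteq> []" using ninS vi by (simp add: inS_def)
    have vcut: "cut t tb v" using v vne ninS vi by (auto simp: cp_top_def marked_def inS_def)
    define m where "m = sz t (child1 tb b)"
    have m1: "m \<ge> 1" using sz_split2[OF bi] by (simp add: m_def)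
    have key: "\<forall>u. u \<in> seg t tb v \<longrightarrow> length b - length u = n \<longrightarrow>
        (AA t tb u)^2 \<le> exp ((real (sz t u) - real m) / sqrt (real m))" for n
    proof (induction n)
      case 0
      show ?case
      proof (intro allI impI)
        fix u assume us: "u \<in> seg t tb v" and "length b - length u = 0"
        then have "u = b" using seglen[OF us] seg_unique[OF us bseg] by simp
        obtain g where g: "AA t tb b = restart (AA t tb (child1 tb b)) * gate_w g (sz t (child1 tb b)) (sz t (child2 tb b))"
          using AA_step[OF bi] by blast
        have r1: "restart (AA t tb (child1 tb b)) = 1"
        proof (cases "internal t (child1 tb b)")
          case True
          have "marked t tb (child1 tb b)"
          proof (rule ccontr)
            assume nm: "\<not> marked t tb (child1 tb b)"
            have "child1 tb b \<in> seg t tb v"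
              unfolding seg_def
            proof (intro CollectI conjI allI impI)
              show "internal t (child1 tb b)" by fact
              show "prefix v (child1 tb b)" using seg_basic[OF bseg]
                by (auto simp: child1_def prefix_def)
              fix k assume kk: "length v < k \<and> k \<le> length (child1 tb b)"
              show "\<not> marked t tb (take k (child1 tb b))"
              proof (cases "k = length (child1 tb b)")
                case True then show ?thesis using nm by simp
              next
                case False
                then have "k \<le> length b" using kk by (simp add: child1_def)
                then have "take k (child1 tb b) = take k b" by (simp add: child1_def)
                then show ?thesis using bseg kk \<open>k \<le> length b\<close> by (auto simp: seg_def)
              qed
            qed
            then show False using c1b_ns by simp
          qed
          then have "cut t tb (child1 tb b)" using c12b by (simp add: marked_def child1_def child2_def)
          then have "AA t tb (child1 tb b) > sqrt (exp 1)"
            by (auto simp: cut_def AA_def split: option.splits)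
          then show ?thesis by (simp add: restart_def)
        next
          case False
          obtain w where w: "subf t (child1 tb b) = Some w" using sz_split2(4)[OF bi] by auto
          then obtain x where "w = Leaf x" using False unfolding internal_def by (cases w) auto
          then have "AA t tb (child1 tb b) = 1" using w by (simp add: AA_def)
          moreover have "\<not> (1::real) > sqrt (exp 1)" by simp
          ultimately show ?thesis by (simp add: restart_def)
        qed
        have "(AA t tb b)^2 = (gate_w g (sz t (child1 tb b)) (sz t (child2 tb b)))^2"
          using g r1 by simp
        also have "\<dots> \<le> exp (real (sz t (child2 tb b)) / sqrt (real m))"
          unfolding gate_w_sq m_def
          using step_bound[of "sz t (child2 tb b)" m "sz t (child1 tb b)"] sz_split2[OF bi, of tb] m1
          by (simp add: m_def of_nat_add[symmetric] del: of_nat_add)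
        also have "real (sz t (child2 tb b)) = real (sz t b) - real m"
          using szb by (simp add: m_def flip: of_nat_add)
        finally show "(AA t tb u)^2 \<le> exp ((real (sz t u) - real m) / sqrt (real m))"
          using \<open>u = b\<close> by simp
      qed
    next
      case (Suc n)
      show ?case
      proof (intro allI impI)
        fix u assume us: "u \<in> seg t tb v" and dn: "length b - length u = Suc n"
        then have lt: "length u < length b" by simp
        have ui: "internal t u" using seg_basic[OF us] by simp
        define y where "y = child1 tb u"
        have ys: "y \<in> seg t tb v" using seg_next[OF us bseg lt] y_def by simp
        have "length y = length u + 1" by (simp add: y_def child1_def)
        then have IH: "(AA t tb y)^2 \<le> exp ((real (sz t y) - real m) / sqrt (real m))"
          using Suc.IH ys dn by auto
        have "y \<noteq> v" using seg_len[OF us] \<open>length y = length u + 1\<close> by auto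
        then have "\<not> marked t tb y" using seg_notmarked[OF ys] by simp
        then have "\<not> cut t tb y" using \<open>y \<noteq> v\<close> seg_len[OF ys] by (auto simp: marked_def)
        moreover have "internal t y" using seg_basic[OF ys] by simp
        ultimately have "\<not> AA t tb y > sqrt (exp 1)"
          by (auto simp: cut_def AA_def internal_def split: option.splits)
        then have ry: "restart (AA t tb y) = AA t tb y" by (simp add: restart_def)
        obtain g where g: "AA t tb u = restart (AA t tb y) * gate_w g (sz t y) (sz t (child2 tb u))"
          using AA_step[OF ui] y_def by blast
        have sum: "sz t y + sz t (child2 tb u) = sz t u" using sz_split2[OF ui] y_def by simp
        have "take (length u) b = u" using seg_prefix_of[OF us bseg] lt by simp
        then have "prefix u b" by (metis take_is_prefix)
        then have "sz t b \<le> sz t u" using sz_prefix bi by (metis internal_def option.distinct(1))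
        moreover have "m \<le> sz t b" using szb m_def by simp
        ultimately have mu: "m \<le> sz t y + sz t (child2 tb u)" using sum by simp
        have "(AA t tb u)^2 = (AA t tb y)^2 * (gate_w g (sz t y) (sz t (child2 tb u)))^2"
          using g ry by (simp add: power_mult_distrib)
        also have "\<dots> \<le> exp ((real (sz t y) - real m) / sqrt (real m)) * exp (real (sz t (child2 tb u)) / sqrt (real m))"
          unfolding gate_w_sq
          using step_bound[of "sz t (child2 tb u)" m "sz t y"] sz_split2[OF ui, of tb] m1 mu IH y_def
          by (intro mult_mono) (auto simp: of_nat_add[symmetric] simp del: of_nat_add)
        also have "\<dots> = exp ((real (sz t u) - real m) / sqrt (real m))"
          unfolding exp_add[symmetric] using sum[symmetric]
          by (simp add: add_divide_distrib[symmetric] algebra_simps)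
        finally show "(AA t tb u)^2 \<le> exp ((real (sz t u) - real m) / sqrt (real m))" .
      qed
    qed
    have vseg: "v \<in> seg t tb v" using v_in_seg[OF vi] .
    have kv: "(AA t tb v)^2 \<le> exp ((real (sz t v) - real m) / sqrt (real m))"
      using key vseg by blast
    have "AA t tb v > sqrt (exp 1)" using vcut by (auto simp: cut_def AA_def split: option.splits)
    then have "(AA t tb v)^2 > (sqrt (exp 1))^2"
      by (intro power_strict_mono) auto
    moreover have "(sqrt (exp 1))^2 = exp 1" by simp
    ultimately have "exp 1 < exp ((real (sz t v) - real m) / sqrt (real m))" using kv by linarith
    then have lt1: "1 < (real (sz t v) - real m) / sqrt (real m)" by (simp only: exp_less_cancel_iff)
    have s2: "real (sz t v) \<ge> 2" using sz_split2[OF vi, of tb] by simp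
    have sm: "real (sz t v) - real m \<ge> 1" using szb szbv sz_split2[OF bi, of tb] m_def by simp
    have fin: "real m \<le> real (sz t v) - sqrt (real (sz t v)) / sqrt 2"
      using final_arith[OF s2 sm _ lt1] by simp
    have "sz t (c 1) \<le> m"
    proof (cases "c 1 = child1 tb b")
      case True then show ?thesis by (simp add: m_def)
    next
      case False
      then have "c 1 = child2 tb b" using c1cases by simp
      then show ?thesis using tb bi by (simp add: admissible_tb_def m_def)
    qed
    then show ?thesis using fin by simp
  qed
  show ?thesis using part1 part2 by blast
qed

end
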